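(* Let $\alpha\in(0,1]$, let $\mathcal{L}$ be the jump uncertainty set in the context, and let $\{Z_i\}$ be an i.i.d. sequence of $\mathbb{R}^d$-valued random variables on a sublinear expectation space $(\Omega,\mathcal{H},\hat{\mathbb{E}})$ with $\hat{\mathbb{E}}[|Z_i|]=\infty$ and $S_n=\sum_{i=1}^nZ_i$, satisfying: (A1) there is $0<\delta<\alpha$ with $M_\delta:=\sup_n\hat{\mathbb{E}}[|n^{-1/\alpha}S_n|^\delta]<\infty$; (A2) there is a function $l$ on $[0,1]$ with $l(s)\to0$ as $s\to0$ such that for each $\varphi\in C_b^3(\mathbb{R}^d)$, $\frac1s\big|\hat{\mathbb{E}}[\varphi(x+s^{1/\alpha}Z_1)-\varphi(x)]-s\sup_{F_\mu\in\mathcal{L}}\int\delta^\alpha_\lambda\varphi(x)F_\mu(d\lambda)\big|\le l(s)$ for all $x\in\mathbb{R}^d$. Then for $\varphi\in C_b^3(\mathbb{R}^d)$ and $s\in[0,1]$, $$\lim_{n\to\infty}\Big|\hat{\mathbb{E}}\big[\varphi(x+(s/n)^{1/\alpha}S_n)\big]-\varphi(x)-s\sup_{F_\mu\in\mathcal{L}}\int_{\mathbb{R}^d}\delta^\alpha_\lambda\varphi(x)F_\mu(d\lambda)\Big|=o(s)$$ uniformly in $x\in\mathbb{R}^d$, where $o(s)/s\to0$ as $s\to0$.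
   Context: Sublinear expectation space: $\hat{\mathbb{E}}$ monotone, constant preserving, sub-additive, positively homogeneous on a space $\mathcal{H}$ closed under composition with bounded Lipschitz functions; random variables need only have $\varphi(X)\in\mathcal{H}$ for bounded Lipschitz $\varphi$. I.i.d.: $Z_{i+1}\overset{d}{=}Z_i$ and $Z_{i+1}$ independent from $(Z_1,\dots,Z_i)$, with independence meaning $\hat{\mathbb{E}}[\varphi(X,Y)]=\hat{\mathbb{E}}[\hat{\mathbb{E}}[\varphi(x,Y)]_{x=X}]$. $F_\mu(B)=\int_S\mu(dz)\int_0^\infty\mathbb{1}_B(rz)r^{-1-\alpha}dr$ for a symmetric finite measure $\mu$ on the unit sphere $S$, and $\mathcal{L}=\{F_\mu:\mu(S)\in(\underline{\Lambda},\overline{\Lambda})\}$ for given $\underline{\Lambda},\overline{\Lambda}>0$. $\delta^\alpha_\lambda\varphi(x)=\varphi(x+\lambda)-\varphi(x)-\langle D\varphi(x),\lambda\mathbb{1}_{\{|\lambda|\le1\}}\rangle$ if $\alpha=1$, $=\varphi(x+\lambda)-\varphi(x)$ if $\alpha\in(0,1)$. $C_b^3$: uniformly bounded derivatives up to order 3. *)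

theory Defs
  imports "HOL-Analysis.Analysis"
begin

definition bl_fun :: "('a::metric_space \<Rightarrow> real) \<Rightarrow> bool" where
  "bl_fun \<phi> \<longleftrightarrow> bounded (range \<phi>) \<and> (\<exists>C. C-lipschitz_on UNIV \<phi>)"

definition bl_tuple :: "nat \<Rightarrow> ((nat \<Rightarrow> 'a::metric_space) \<Rightarrow> real) \<Rightarrow> bool" where
  "bl_tuple n \<phi> \<longleftrightarrow> bounded (range \<phi>) \<and>
     (\<exists>C. \<forall>x y. \<bar>\<phi> x - \<phi> y\<bar> \<le> C * (\<Sum>k<n. dist (x k) (y k)))"

definition bl_tuple2 :: "nat \<Rightarrow> ((nat \<Rightarrow> 'a::metric_space) \<Rightarrow> 'a \<Rightarrow> real) \<Rightarrow> bool" where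
  "bl_tuple2 n \<phi> \<longleftrightarrow> bounded (range (case_prod \<phi>)) \<and>
     (\<exists>C. \<forall>x y x' y'. \<bar>\<phi> x y - \<phi> x' y'\<bar> \<le> C * ((\<Sum>k<n. dist (x k) (x' k)) + dist y y'))"

definition sublinear_expectation_space :: "('w \<Rightarrow> real) set \<Rightarrow> (('w \<Rightarrow> real) \<Rightarrow> real) \<Rightarrow> bool" where
  "sublinear_expectation_space H E \<longleftrightarrow>
     (\<forall>c. (\<lambda>_. c) \<in> H) \<and> (\<forall>X\<in>H. \<forall>Y\<in>H. (\<lambda>w. X w + Y w) \<in> H) \<and> (\<forall>X\<in>H. \<forall>c. (\<lambda>w. c * X w) \<in> H) \<and>
     (\<forall>n (X::nat \<Rightarrow> 'w \<Rightarrow> real) \<phi>. (\<forall>k<n. X k \<in> H) \<longrightarrow> bl_tuple n \<phi> \<longrightarrow> (\<lambda>w. \<phi> (\<lambda>k. X k w)) \<in> H) \<and>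
     (\<forall>X\<in>H. \<forall>Y\<in>H. (\<forall>w. X w \<le> Y w) \<longrightarrow> E X \<le> E Y) \<and>
     (\<forall>c. E (\<lambda>_. c) = c) \<and>
     (\<forall>X\<in>H. \<forall>Y\<in>H. E (\<lambda>w. X w + Y w) \<le> E X + E Y) \<and>
     (\<forall>X\<in>H. \<forall>c\<ge>0. E (\<lambda>w. c * X w) = c * E X)"

definition random_seq :: "('w \<Rightarrow> real) set \<Rightarrow> (nat \<Rightarrow> 'w \<Rightarrow> 'd::metric_space) \<Rightarrow> bool" where
  "random_seq H Z \<longleftrightarrow> (\<forall>n \<phi>. bl_tuple n \<phi> \<longrightarrow> (\<lambda>w. \<phi> (\<lambda>k. Z k w)) \<in> H)"

definition ident_distr :: "(('w \<Rightarrow> real) \<Rightarrow> real) \<Rightarrow> ('w \<Rightarrow> 'd::metric_space) \<Rightarrow> ('w \<Rightarrow> 'd) \<Rightarrow> bool" where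
  "ident_distr E X Y \<longleftrightarrow> (\<forall>\<phi>::'d \<Rightarrow> real. bl_fun \<phi> \<longrightarrow> E (\<lambda>w. \<phi> (X w)) = E (\<lambda>w. \<phi> (Y w)))"

definition indep_of_prefix :: "(('w \<Rightarrow> real) \<Rightarrow> real) \<Rightarrow> (nat \<Rightarrow> 'w \<Rightarrow> 'd::metric_space) \<Rightarrow> nat \<Rightarrow> bool" where
  "indep_of_prefix E Z i \<longleftrightarrow> (\<forall>\<phi>. bl_tuple2 (Suc i) \<phi> \<longrightarrow>
     E (\<lambda>w. \<phi> (\<lambda>k. Z k w) (Z (Suc i) w)) = E (\<lambda>w. E (\<lambda>v. \<phi> (\<lambda>k. Z k w) (Z (Suc i) v))))"

definition iid_seq :: "('w \<Rightarrow> real) set \<Rightarrow> (('w \<Rightarrow> real) \<Rightarrow> real) \<Rightarrow> (nat \<Rightarrow> 'w \<Rightarrow> 'd::metric_space) \<Rightarrow> bool" where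
  "iid_seq H E Z \<longleftrightarrow> random_seq H Z \<and> (\<forall>i. ident_distr E (Z (Suc i)) (Z i)) \<and> (\<forall>i. indep_of_prefix E Z i)"

text \<open>Extension of E to f(X) for nonnegative f (possibly outside H), as a supremum over
  bounded Lipschitz minorants.\<close>
definition ext_expect :: "(('w \<Rightarrow> real) \<Rightarrow> real) \<Rightarrow> ('a::metric_space \<Rightarrow> real) \<Rightarrow> ('w \<Rightarrow> 'a) \<Rightarrow> ereal" where
  "ext_expect E f X = (SUP \<phi>\<in>{\<phi>. bl_fun \<phi> \<and> (\<forall>x. 0 \<le> \<phi> x \<and> \<phi> x \<le> f x)}. ereal (E (\<lambda>w. \<phi> (X w))))"

definition Cb3 :: "('d::euclidean_space \<Rightarrow> real) \<Rightarrow> bool" where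
  "Cb3 \<phi> \<longleftrightarrow> (\<exists>D1 D2 D3 B.
     (\<forall>x. (\<phi> has_derivative D1 x) (at x)) \<and>
     (\<forall>x u. ((\<lambda>y. D1 y u) has_derivative D2 x u) (at x)) \<and>
     (\<forall>x u v. ((\<lambda>y. D2 y u v) has_derivative D3 x u v) (at x)) \<and>
     (\<forall>u v w. continuous_on UNIV (\<lambda>x. D3 x u v w)) \<and>
     (\<forall>x. \<bar>\<phi> x\<bar> \<le> B) \<and>
     (\<forall>x u. \<bar>D1 x u\<bar> \<le> B * norm u) \<and>
     (\<forall>x u v. \<bar>D2 x u v\<bar> \<le> B * norm u * norm v) \<and>
     (\<forall>x u v w. \<bar>D3 x u v w\<bar> \<le> B * norm u * norm v * norm w))"

definition jump_incr :: "real \<Rightarrow> ('d::euclidean_space \<Rightarrow> real) \<Rightarrow> 'd \<Rightarrow> 'd \<Rightarrow> real" where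
  "jump_incr \<alpha> \<phi> x y =
     (if \<alpha> = 1 then \<phi> (x + y) - \<phi> x - (if norm y \<le> 1 then frechet_derivative \<phi> (at x) y else 0)
      else \<phi> (x + y) - \<phi> x)"

definition sym_sphere_measure :: "'d::euclidean_space measure \<Rightarrow> bool" where
  "sym_sphere_measure \<mu> \<longleftrightarrow> sets \<mu> = sets (restrict_space borel (sphere 0 1)) \<and> finite_measure \<mu> \<and>
     (\<forall>A\<in>sets \<mu>. emeasure \<mu> (uminus ` A) = emeasure \<mu> A)"

text \<open>F_mu(B) = int_S mu(dz) int_0^infty 1_B(r z) r^(-1-alpha) dr.\<close>
definition levy_F :: "real \<Rightarrow> 'd::euclidean_space measure \<Rightarrow> 'd measure" where
  "levy_F \<alpha> \<mu> = distr (\<mu> \<Otimes>\<^sub>M density (restrict_space lborel {0<..}) (\<lambda>r. ennreal (r powr (-1 - \<alpha>))))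
                     borel (\<lambda>(z, r). r *\<^sub>R z)"

definition jump_set :: "real \<Rightarrow> real \<Rightarrow> real \<Rightarrow> 'd::euclidean_space measure set" where
  "jump_set \<alpha> \<Lambda>l \<Lambda>u = {levy_F \<alpha> \<mu> | \<mu>. sym_sphere_measure \<mu> \<and>
      \<Lambda>l < measure \<mu> (space \<mu>) \<and> measure \<mu> (space \<mu>) < \<Lambda>u}"

definition sup_gen :: "real \<Rightarrow> real \<Rightarrow> real \<Rightarrow> ('d::euclidean_space \<Rightarrow> real) \<Rightarrow> 'd \<Rightarrow> real" where
  "sup_gen \<alpha> \<Lambda>l \<Lambda>u \<phi> x = (SUP F\<in>jump_set \<alpha> \<Lambda>l \<Lambda>u. (LINT y|F. jump_incr \<alpha> \<phi> x y))"

end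

theory Submission
  imports Defs
begin

lemma seH_const: "sublinear_expectation_space H E \<Longrightarrow> (\<lambda>_. c) \<in> H"
  unfolding sublinear_expectation_space_def by blast
lemma seH_add: "sublinear_expectation_space H E \<Longrightarrow> X \<in> H \<Longrightarrow> Y \<in> H \<Longrightarrow> (\<lambda>w. X w + Y w) \<in> H"
  unfolding sublinear_expectation_space_def by blast
lemma seH_cmult: "sublinear_expectation_space H E \<Longrightarrow> X \<in> H \<Longrightarrow> (\<lambda>w. c * X w) \<in> H"
  unfolding sublinear_expectation_space_def by blast
lemma seE_mono: "sublinear_expectation_space H E \<Longrightarrow> X \<in> H \<Longrightarrow> Y \<in> H \<Longrightarrow> (\<And>w. X w \<le> Y w) \<Longrightarrow> E X \<le> E Y"
  unfolding sublinear_expectation_space_def by blast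
lemma seE_const: "sublinear_expectation_space H E \<Longrightarrow> E (\<lambda>_. c) = c"
  unfolding sublinear_expectation_space_def by blast
lemma seE_add: "sublinear_expectation_space H E \<Longrightarrow> X \<in> H \<Longrightarrow> Y \<in> H \<Longrightarrow> E (\<lambda>w. X w + Y w) \<le> E X + E Y"
  unfolding sublinear_expectation_space_def by blast
lemma seE_cmult: "sublinear_expectation_space H E \<Longrightarrow> X \<in> H \<Longrightarrow> 0 \<le> c \<Longrightarrow> E (\<lambda>w. c * X w) = c * E X"
  unfolding sublinear_expectation_space_def by blast

lemma seH_addc: "sublinear_expectation_space H E \<Longrightarrow> X \<in> H \<Longrightarrow> (\<lambda>w. X w + c) \<in> H"
  using seH_add[of H E X "\<lambda>_. c"] seH_const by blast

lemma seE_add_const: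
  assumes sp: "sublinear_expectation_space H E" and X: "X \<in> H"
  shows "E (\<lambda>w. X w + c) = E X + c"
proof -
  have a: "E (\<lambda>w. X w + c) \<le> E X + c"
    using seE_add[OF sp X seH_const[OF sp], of c] seE_const[OF sp] by simp
  have "E X = E (\<lambda>w. (X w + c) + (-c))" by simp
  also have "\<dots> \<le> E (\<lambda>w. X w + c) + E (\<lambda>_. -c)"
    using seE_add[OF sp seH_addc[OF sp X] seH_const[OF sp]] by blast
  finally have "E X \<le> E (\<lambda>w. X w + c) - c" using seE_const[OF sp] by simp
  with a show ?thesis by simp
qed

lemma seE_lip:
  assumes sp: "sublinear_expectation_space H E" and X: "X \<in> H" and Y: "Y \<in> H"
    and b: "\<And>w. \<bar>X w - Y w\<bar> \<le> e"
  shows "\<bar>E X - E Y\<bar> \<le> e"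
proof -
  have "E X \<le> E (\<lambda>w. Y w + e)" by (rule seE_mono[OF sp X seH_addc[OF sp Y]]) (use b in \<open>smt (verit)\<close>)
  moreover have "E Y \<le> E (\<lambda>w. X w + e)" by (rule seE_mono[OF sp Y seH_addc[OF sp X]]) (use b in \<open>smt (verit)\<close>)
  ultimately show ?thesis using seE_add_const[OF sp X] seE_add_const[OF sp Y] by (simp add: abs_le_iff)
qed

lemma seE_step:
  assumes sp: "sublinear_expectation_space H E" and X: "X \<in> H" and D: "D \<in> H" and Bt: "Bt \<in> H"
    and b: "\<And>w. \<bar>D w - a\<bar> \<le> Bt w"
  shows "\<bar>E (\<lambda>w. X w + D w) - E X - a\<bar> \<le> E Bt"
proof -
  have XB: "(\<lambda>w. X w + Bt w) \<in> H" using seH_add[OF sp X Bt] .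
  have "E (\<lambda>w. X w + D w) \<le> E (\<lambda>w. (X w + Bt w) + a)"
    by (rule seE_mono[OF sp seH_add[OF sp X D] seH_addc[OF sp XB]]) (use b in \<open>smt (verit)\<close>)
  also have "\<dots> = E (\<lambda>w. X w + Bt w) + a" using seE_add_const[OF sp XB] .
  also have "\<dots> \<le> E X + E Bt + a" using seE_add[OF sp X Bt] by simp
  finally have 1: "E (\<lambda>w. X w + D w) \<le> E X + E Bt + a" .
  have XD: "(\<lambda>w. X w + D w) \<in> H" using seH_add[OF sp X D] .
  have Ba: "(\<lambda>w. Bt w + (-a)) \<in> H" using seH_addc[OF sp Bt] .
  have "E X \<le> E (\<lambda>w. (X w + D w) + (Bt w + (-a)))"
    by (rule seE_mono[OF sp X seH_add[OF sp XD Ba]]) (use b in \<open>smt (verit)\<close>)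
  also have "\<dots> \<le> E (\<lambda>w. X w + D w) + E (\<lambda>w. Bt w + (-a))" using seE_add[OF sp XD Ba] .
  also have "\<dots> = E (\<lambda>w. X w + D w) + E Bt - a" using seE_add_const[OF sp Bt, of "-a"] by simp
  finally show ?thesis using 1 by (simp add: abs_le_iff)
qed

lemma bl_tuple_lin:
  fixes g :: "'d::real_normed_vector \<Rightarrow> real"
  assumes gB: "\<And>y. \<bar>g y\<bar> \<le> B" and gL: "\<And>a b. \<bar>g a - g b\<bar> \<le> L * norm (a - b)" and L: "0 \<le> L"
  shows "bl_tuple k (\<lambda>z. g (x + c *\<^sub>R (\<Sum>i<k. z i)))"
  unfolding bl_tuple_def
proof
  show "bounded (range (\<lambda>z. g (x + c *\<^sub>R (\<Sum>i<k. z i))))"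
    unfolding bounded_iff using gB by auto
  show "\<exists>C. \<forall>z z'. \<bar>g (x + c *\<^sub>R (\<Sum>i<k. z i)) - g (x + c *\<^sub>R (\<Sum>i<k. z' i))\<bar> \<le> C * (\<Sum>i<k. dist (z i) (z' i))"
  proof (intro exI allI)
    fix z z' :: "nat \<Rightarrow> 'd"
    have "\<bar>g (x + c *\<^sub>R (\<Sum>i<k. z i)) - g (x + c *\<^sub>R (\<Sum>i<k. z' i))\<bar>
        \<le> L * norm ((x + c *\<^sub>R (\<Sum>i<k. z i)) - (x + c *\<^sub>R (\<Sum>i<k. z' i)))" by (rule gL)
    also have "norm ((x + c *\<^sub>R (\<Sum>i<k. z i)) - (x + c *\<^sub>R (\<Sum>i<k. z' i))) = \<bar>c\<bar> * norm (\<Sum>i<k. z i - z' i)"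
      by (simp add: sum_subtractf scaleR_diff_right[symmetric])
    also have "norm (\<Sum>i<k. z i - z' i) \<le> (\<Sum>i<k. dist (z i) (z' i))"
      by (simp add: dist_norm norm_sum)
    finally show "\<bar>g (x + c *\<^sub>R (\<Sum>i<k. z i)) - g (x + c *\<^sub>R (\<Sum>i<k. z' i))\<bar> \<le> (L * \<bar>c\<bar>) * (\<Sum>i<k. dist (z i) (z' i))"
      using L by (simp add: mult_left_mono mult.assoc)
  qed
qed

lemma bl_fun_lin:
  fixes g :: "'d::real_normed_vector \<Rightarrow> real"
  assumes gB: "\<And>y. \<bar>g y\<bar> \<le> B" and gL: "\<And>a b. \<bar>g a - g b\<bar> \<le> L * norm (a - b)" and L: "0 \<le> L"
  shows "bl_fun (\<lambda>z. g (y + c *\<^sub>R z))"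
  unfolding bl_fun_def lipschitz_on_def
proof (intro conjI exI)
  show "bounded (range (\<lambda>z. g (y + c *\<^sub>R z)))" unfolding bounded_iff using gB by auto
  show "0 \<le> L * \<bar>c\<bar>" using L by simp
  show "\<forall>a\<in>UNIV. \<forall>b\<in>UNIV. dist (g (y + c *\<^sub>R a)) (g (y + c *\<^sub>R b)) \<le> L * \<bar>c\<bar> * dist a b"
  proof (intro ballI)
    fix a b :: 'd
    have "dist (g (y + c *\<^sub>R a)) (g (y + c *\<^sub>R b)) \<le> L * norm ((y + c *\<^sub>R a) - (y + c *\<^sub>R b))"
      using gL[of "y + c *\<^sub>R a" "y + c *\<^sub>R b"] by (simp only: dist_real_def)
    also have "norm ((y + c *\<^sub>R a) - (y + c *\<^sub>R b)) = \<bar>c\<bar> * dist a b"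
      by (simp add: dist_norm scaleR_diff_right[symmetric])
    finally show "dist (g (y + c *\<^sub>R a)) (g (y + c *\<^sub>R b)) \<le> L * \<bar>c\<bar> * dist a b" by (simp add: mult.assoc)
  qed
qed

lemma ident_all:
  assumes "iid_seq H E Z" shows "ident_distr E (Z k) (Z 0)"
proof (induction k)
  case 0 show ?case unfolding ident_distr_def by simp
next
  case (Suc k)
  from assms have "ident_distr E (Z (Suc k)) (Z k)" unfolding iid_seq_def by blast
  with Suc show ?case unfolding ident_distr_def by simp
qed


lemma bl_tuple2_lin:
  fixes g :: "'d::real_normed_vector \<Rightarrow> real"
  assumes gB: "\<And>y. \<bar>g y\<bar> \<le> B" and gL: "\<And>a b. \<bar>g a - g b\<bar> \<le> L * norm (a - b)" and L: "0 \<le> L"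
  shows "bl_tuple2 k (\<lambda>z y. g (x + c *\<^sub>R (\<Sum>i<k. z i) + c *\<^sub>R y))"
  unfolding bl_tuple2_def
proof
  show "bounded (range (case_prod (\<lambda>z y. g (x + c *\<^sub>R (\<Sum>i<k. z i) + c *\<^sub>R y))))"
    unfolding bounded_iff using gB by auto
  show "\<exists>C. \<forall>z y z' y'. \<bar>g (x + c *\<^sub>R (\<Sum>i<k. z i) + c *\<^sub>R y) - g (x + c *\<^sub>R (\<Sum>i<k. z' i) + c *\<^sub>R y')\<bar> \<le> C * ((\<Sum>i<k. dist (z i) (z' i)) + dist y y')"
  proof (intro exI allI)
    fix z z' :: "nat \<Rightarrow> 'd" and y y' :: 'd
    have "\<bar>g (x + c *\<^sub>R (\<Sum>i<k. z i) + c *\<^sub>R y) - g (x + c *\<^sub>R (\<Sum>i<k. z' i) + c *\<^sub>R y')\<bar>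
        \<le> L * norm ((x + c *\<^sub>R (\<Sum>i<k. z i) + c *\<^sub>R y) - (x + c *\<^sub>R (\<Sum>i<k. z' i) + c *\<^sub>R y'))" by (rule gL)
    also have "norm ((x + c *\<^sub>R (\<Sum>i<k. z i) + c *\<^sub>R y) - (x + c *\<^sub>R (\<Sum>i<k. z' i) + c *\<^sub>R y')) = \<bar>c\<bar> * norm ((\<Sum>i<k. z i - z' i) + (y - y'))"
    proof -
      have "(x + c *\<^sub>R (\<Sum>i<k. z i) + c *\<^sub>R y) - (x + c *\<^sub>R (\<Sum>i<k. z' i) + c *\<^sub>R y') = c *\<^sub>R ((\<Sum>i<k. z i - z' i) + (y - y'))"
        by (simp add: sum_subtractf scaleR_diff_right scaleR_right_distrib)
      then show ?thesis by simp
    qed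
    also have "norm ((\<Sum>i<k. z i - z' i) + (y - y')) \<le> (\<Sum>i<k. dist (z i) (z' i)) + dist y y'"
    proof -
      have "norm ((\<Sum>i<k. z i - z' i) + (y - y')) \<le> norm (\<Sum>i<k. z i - z' i) + norm (y - y')" by (rule norm_triangle_ineq)
      also have "norm (\<Sum>i<k. z i - z' i) \<le> (\<Sum>i<k. norm (z i - z' i))" by (rule norm_sum)
      finally show ?thesis by (simp add: dist_norm)
    qed
    finally show "\<bar>g (x + c *\<^sub>R (\<Sum>i<k. z i) + c *\<^sub>R y) - g (x + c *\<^sub>R (\<Sum>i<k. z' i) + c *\<^sub>R y')\<bar> \<le> (L * \<bar>c\<bar>) * ((\<Sum>i<k. dist (z i) (z' i)) + dist y y')"
      using L by (simp add: mult_left_mono mult.assoc)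
  qed
qed

lemma memH:
  fixes g :: "'d::real_normed_vector \<Rightarrow> real"
  assumes iid: "iid_seq H E Z" and gB: "\<And>y. \<bar>g y\<bar> \<le> B" and gL: "\<And>a b. \<bar>g a - g b\<bar> \<le> L * norm (a - b)" and L: "0 \<le> L"
  shows "(\<lambda>w. g (x + c *\<^sub>R (\<Sum>i<k. Z i w))) \<in> H"
  using iid bl_tuple_lin[OF gB gL L, of k x c] unfolding iid_seq_def random_seq_def by blast

lemma memH0:
  fixes g :: "'d::real_normed_vector \<Rightarrow> real"
  assumes iid: "iid_seq H E Z" and gB: "\<And>y. \<bar>g y\<bar> \<le> B" and gL: "\<And>a b. \<bar>g a - g b\<bar> \<le> L * norm (a - b)" and L: "0 \<le> L"
  shows "(\<lambda>w. g (x + c *\<^sub>R Z 0 w)) \<in> H"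
  using memH[OF iid gB gL L, of x c 1] by simp

lemma step_formula:
  fixes g :: "'d::real_normed_vector \<Rightarrow> real"
  assumes sp: "sublinear_expectation_space H E" and iid: "iid_seq H E Z"
    and gB: "\<And>y. \<bar>g y\<bar> \<le> B" and gL: "\<And>a b. \<bar>g a - g b\<bar> \<le> L * norm (a - b)" and L: "0 \<le> L"
  shows "E (\<lambda>w. g (x + c *\<^sub>R (\<Sum>i<Suc k. Z i w))) = E (\<lambda>w. E (\<lambda>v. g ((x + c *\<^sub>R (\<Sum>i<k. Z i w)) + c *\<^sub>R Z 0 v)))"
proof (cases k)
  case 0
  then show ?thesis using seE_const[OF sp] by simp
next
  case (Suc i)
  have ind: "indep_of_prefix E Z i" using iid unfolding iid_seq_def by blast
  have "E (\<lambda>w. (\<lambda>z y. g (x + c *\<^sub>R (\<Sum>j<Suc i. z j) + c *\<^sub>R y)) (\<lambda>k. Z k w) (Z (Suc i) w))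
      = E (\<lambda>w. E (\<lambda>v. (\<lambda>z y. g (x + c *\<^sub>R (\<Sum>j<Suc i. z j) + c *\<^sub>R y)) (\<lambda>k. Z k w) (Z (Suc i) v)))"
    using ind bl_tuple2_lin[OF gB gL L, of "Suc i" x c] unfolding indep_of_prefix_def by blast
  hence eq: "E (\<lambda>w. g (x + c *\<^sub>R (\<Sum>j<Suc i. Z j w) + c *\<^sub>R Z (Suc i) w))
      = E (\<lambda>w. E (\<lambda>v. g (x + c *\<^sub>R (\<Sum>j<Suc i. Z j w) + c *\<^sub>R Z (Suc i) v)))" by simp
  have idd: "ident_distr E (Z (Suc i)) (Z 0)" by (rule ident_all[OF iid])
  have inner: "E (\<lambda>v. g (y + c *\<^sub>R Z (Suc i) v)) = E (\<lambda>v. g (y + c *\<^sub>R Z 0 v))" for y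
    using idd bl_fun_lin[OF gB gL L, of y c] unfolding ident_distr_def by blast
  have "E (\<lambda>w. g (x + c *\<^sub>R (\<Sum>j<Suc k. Z j w))) = E (\<lambda>w. g (x + c *\<^sub>R (\<Sum>j<Suc i. Z j w) + c *\<^sub>R Z (Suc i) w))"
    using Suc by (simp add: scaleR_right_distrib add.assoc)
  also have "\<dots> = E (\<lambda>w. E (\<lambda>v. g (x + c *\<^sub>R (\<Sum>j<Suc i. Z j w) + c *\<^sub>R Z 0 v)))"
    using eq inner by simp
  finally show ?thesis using Suc by simp
qed

lemma T_bound:
  fixes g :: "'d::real_normed_vector \<Rightarrow> real"
  assumes sp: "sublinear_expectation_space H E" and iid: "iid_seq H E Z"
    and gB: "\<And>y. \<bar>g y\<bar> \<le> B" and gL: "\<And>a b. \<bar>g a - g b\<bar> \<le> L * norm (a - b)" and L: "0 \<le> L"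
  shows "\<bar>E (\<lambda>v. g (y + c *\<^sub>R Z 0 v))\<bar> \<le> B"
  using seE_lip[OF sp memH0[OF iid gB gL L, of y c] seH_const[OF sp, of 0]] gB seE_const[OF sp, of 0] by simp

lemma T_lip:
  fixes g :: "'d::real_normed_vector \<Rightarrow> real"
  assumes sp: "sublinear_expectation_space H E" and iid: "iid_seq H E Z"
    and gB: "\<And>y. \<bar>g y\<bar> \<le> B" and gL: "\<And>a b. \<bar>g a - g b\<bar> \<le> L * norm (a - b)" and L: "0 \<le> L"
  shows "\<bar>E (\<lambda>v. g (y + c *\<^sub>R Z 0 v)) - E (\<lambda>v. g (y' + c *\<^sub>R Z 0 v))\<bar> \<le> L * norm (y - y')"
proof (rule seE_lip[OF sp memH0[OF iid gB gL L] memH0[OF iid gB gL L]])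
  fix w
  show "\<bar>g (y + c *\<^sub>R Z 0 w) - g (y' + c *\<^sub>R Z 0 w)\<bar> \<le> L * norm (y - y')"
    using gL[of "y + c *\<^sub>R Z 0 w" "y' + c *\<^sub>R Z 0 w"] by simp
qed


definition qf :: "real \<Rightarrow> 'd::real_normed_vector \<Rightarrow> real" where
  "qf r z = min 1 (max 0 (norm z / r - 1))"

lemma qf_bounds: "0 \<le> qf r z" "qf r z \<le> 1" "\<bar>qf r z\<bar> \<le> 1"
  unfolding qf_def by auto

lemma qf_lip: assumes "0 < r" shows "\<bar>qf r a - qf r b\<bar> \<le> (1 / r) * norm (a - b)"
proof -
  have "\<bar>norm a / r - norm b / r\<bar> \<le> (1/r) * norm (a - b)"
    using norm_triangle_ineq3[of a b] assms by (simp add: diff_divide_distrib[symmetric] abs_div divide_right_mono)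
  then show ?thesis unfolding qf_def by linarith
qed

lemma qf_zero: "qf r (0::'d::real_normed_vector) = 0" unfolding qf_def by simp

lemma qf_big: assumes "0 < r" "2 * r \<le> norm z" shows "qf r z = 1"
proof -
  have "2 \<le> norm z / r" using assms by (simp add: le_divide_eq)
  then show ?thesis unfolding qf_def by simp
qed

lemma ext_upper:
  assumes "bl_fun f" "\<And>x. 0 \<le> f x \<and> f x \<le> g x"
  shows "ereal (E (\<lambda>w. f (X w))) \<le> ext_expect E g X"
  unfolding ext_expect_def by (rule SUP_upper) (use assms in auto)

lemma ext_nonneg:
  fixes g :: "'a::metric_space \<Rightarrow> real"
  assumes sp: "sublinear_expectation_space H E" and g: "\<And>x. 0 \<le> g x"
  shows "0 \<le> ext_expect E g X"
proof -
  have "bl_fun (\<lambda>_::'a. 0::real)" unfolding bl_fun_def lipschitz_on_def by auto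
  then have "ereal (E (\<lambda>w. (\<lambda>_. 0::real) (X w))) \<le> ext_expect E g X" by (rule ext_upper) (use g in auto)
  then show ?thesis using seE_const[OF sp, of 0] by (simp add: zero_ereal_def)
qed

lemma q_bound:
  fixes Z :: "nat \<Rightarrow> 'w \<Rightarrow> 'd::real_normed_vector"
  assumes sp: "sublinear_expectation_space H E" and iid: "iid_seq H E Z"
    and M: "ext_expect E (\<lambda>y. norm y powr \<delta>) (\<lambda>w. p *\<^sub>R (\<Sum>i<k. Z i w)) \<le> ereal M"
    and t: "0 < t" and r: "0 < r" and d: "0 < \<delta>"
  shows "E (\<lambda>w. qf r (t *\<^sub>R (p *\<^sub>R (\<Sum>i<k. Z i w)))) \<le> t powr \<delta> * M / r powr \<delta>"
proof -
  define a where "a = r powr \<delta> / t powr \<delta>"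
  have a: "0 < a" unfolding a_def using t r by simp
  define g where "g = (\<lambda>y::'d. a * qf r y)"
  have gB: "\<bar>g y\<bar> \<le> a" for y unfolding g_def using qf_bounds[of r y] a by (simp add: abs_mult)
  have gL: "\<bar>g y - g y'\<bar> \<le> (a / r) * norm (y - y')" for y y'
  proof -
    have "\<bar>g y - g y'\<bar> = a * \<bar>qf r y - qf r y'\<bar>" unfolding g_def using a by (simp add: abs_mult right_diff_distrib[symmetric])
    also have "\<dots> \<le> a * ((1 / r) * norm (y - y'))" using mult_left_mono[OF qf_lip[OF r, of y y']] a by simp
    finally show ?thesis by simp
  qed
  have aL: "0 \<le> a / r" using a r by simp
  have blf: "bl_fun (\<lambda>z. g (0 + t *\<^sub>R z))" by (rule bl_fun_lin[OF gB gL aL])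
  have le: "0 \<le> g (0 + t *\<^sub>R z) \<and> g (0 + t *\<^sub>R z) \<le> norm z powr \<delta>" for z
  proof
    show "0 \<le> g (0 + t *\<^sub>R z)" unfolding g_def using a qf_bounds(1)[of r "t *\<^sub>R z"] by simp
    show "g (0 + t *\<^sub>R z) \<le> norm z powr \<delta>"
    proof (cases "qf r (t *\<^sub>R z) = 0")
      case True then show ?thesis unfolding g_def by simp
    next
      case False
      then have "0 < norm (t *\<^sub>R z) / r - 1" unfolding qf_def by (smt (verit) max_def min_def)
      then have "r < norm (t *\<^sub>R z)" using r by (simp add: field_simps)
      then have "r powr \<delta> \<le> (t * norm z) powr \<delta>" using r t d by (simp add: powr_mono2)
      also have "\<dots> = t powr \<delta> * norm z powr \<delta>" using t by (simp add: powr_mult)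
      finally have "a \<le> norm z powr \<delta>" unfolding a_def using t by (simp add: divide_le_eq mult.commute)
      moreover have "a * qf r (t *\<^sub>R z) \<le> a" using a qf_bounds(2)[of r "t *\<^sub>R z"] by simp
      ultimately show ?thesis unfolding g_def by simp
    qed
  qed
  have "ereal (E (\<lambda>w. g (0 + t *\<^sub>R (p *\<^sub>R (\<Sum>i<k. Z i w))))) \<le> ereal M"
    using ext_upper[OF blf le] M order_trans by blast
  then have 1: "E (\<lambda>w. g (0 + t *\<^sub>R (p *\<^sub>R (\<Sum>i<k. Z i w)))) \<le> M" by simp
  have memq: "(\<lambda>w. qf r (t *\<^sub>R (p *\<^sub>R (\<Sum>i<k. Z i w)))) \<in> H"
    using memH[OF iid qf_bounds(3) qf_lip[OF r], of 0 "t * p" k] r by simp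
  have "E (\<lambda>w. g (0 + t *\<^sub>R (p *\<^sub>R (\<Sum>i<k. Z i w)))) = a * E (\<lambda>w. qf r (t *\<^sub>R (p *\<^sub>R (\<Sum>i<k. Z i w))))"
    unfolding g_def using seE_cmult[OF sp memq, of a] a by simp
  with 1 have "a * E (\<lambda>w. qf r (t *\<^sub>R (p *\<^sub>R (\<Sum>i<k. Z i w)))) \<le> M" by simp
  then show ?thesis unfolding a_def using t r by (simp add: field_simps)
qed

lemma cb3_bl:
  fixes \<phi> :: "'d::euclidean_space \<Rightarrow> real"
  assumes "Cb3 \<phi>"
  obtains B where "0 \<le> B" "\<And>y. \<bar>\<phi> y\<bar> \<le> B" "\<And>a b. \<bar>\<phi> a - \<phi> b\<bar> \<le> B * norm (a - b)"
proof -
  have "\<exists>D1 B. (\<forall>x. (\<phi> has_derivative D1 x) (at x)) \<and> (\<forall>x. \<bar>\<phi> x\<bar> \<le> B) \<and> (\<forall>x u. \<bar>D1 x u\<bar> \<le> B * norm u)"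
    using assms unfolding Cb3_def by (elim exE conjE) blast
  then obtain D1 B where d: "\<And>x. (\<phi> has_derivative D1 x) (at x)" and b: "\<And>x. \<bar>\<phi> x\<bar> \<le> B"
    and d1: "\<And>x u. \<bar>D1 x u\<bar> \<le> B * norm u" by blast
  have B: "0 \<le> B" using b[of 0] by simp
  have "\<bar>\<phi> a - \<phi> b\<bar> \<le> B * norm (a - b)" for a b
  proof -
    have "norm (\<phi> a - \<phi> b) \<le> B * norm (a - b)"
    proof (rule differentiable_bound[of UNIV \<phi> D1])
      show "\<And>x. x \<in> UNIV \<Longrightarrow> (\<phi> has_derivative D1 x) (at x within UNIV)" using d by simp
      show "\<And>x. x \<in> UNIV \<Longrightarrow> onorm (D1 x) \<le> B" by (rule onorm_le) (use d1 in simp)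
    qed auto
    then show ?thesis by simp
  qed
  with B b show ?thesis using that by blast
qed


lemma main_bound:
  fixes Z :: "nat \<Rightarrow> 'w \<Rightarrow> 'd::real_normed_vector" and \<phi> :: "'d \<Rightarrow> real" and G :: "'d \<Rightarrow> real"
  assumes sp: "sublinear_expectation_space H E" and iid: "iid_seq H E Z"
    and B0: "0 \<le> B" and \<phi>B: "\<And>y. \<bar>\<phi> y\<bar> \<le> B" and \<phi>L: "\<And>a b. \<bar>\<phi> a - \<phi> b\<bar> \<le> B * norm (a - b)"
    and A2: "\<forall>s\<in>{0<..1}. \<forall>x. \<bar>E (\<lambda>w. \<phi> (x + s powr (1 / \<alpha>) *\<^sub>R Z 0 w) - \<phi> x) - s * G x\<bar> / s \<le> l s"
    and Mb: "\<And>k. 1 \<le> k \<Longrightarrow> ext_expect E (\<lambda>y. norm y powr \<delta>) (\<lambda>w. real k powr (-1 / \<alpha>) *\<^sub>R (\<Sum>i<k. Z i w)) \<le> ereal M"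
    and M0: "0 \<le> M" and al: "0 < \<alpha>" and de: "0 < \<delta>"
    and s: "0 < s" "s \<le> 1" and n: "1 \<le> n" and ta: "0 < \<tau>" "\<tau> \<le> 1" and r: "0 < r"
  shows "\<bar>E (\<lambda>w. \<phi> (x + (s / real n) powr (1 / \<alpha>) *\<^sub>R (\<Sum>i<n. Z i w))) - \<phi> x - s * G x\<bar>
     \<le> s * (l (s / real n) + 2 * l \<tau> + 4 * B * r / \<tau> + 2 * (2 * B + l 1) * M * s powr (\<delta> / \<alpha>) / r powr \<delta>)"
proof -
  define T where "T h y = E (\<lambda>v. \<phi> (y + h powr (1 / \<alpha>) *\<^sub>R Z 0 v))" for h y
  have TB: "\<bar>T h y\<bar> \<le> B" for h y unfolding T_def by (rule T_bound[OF sp iid \<phi>B \<phi>L B0])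
  have TL: "\<bar>T h y - T h y'\<bar> \<le> B * norm (y - y')" for h y y' unfolding T_def by (rule T_lip[OF sp iid \<phi>B \<phi>L B0])
  have A2': "\<bar>T h y - \<phi> y - h * G y\<bar> \<le> h * l h" if h: "0 < h" "h \<le> 1" for h y
  proof -
    have "E (\<lambda>w. \<phi> (y + h powr (1 / \<alpha>) *\<^sub>R Z 0 w) - \<phi> y) = T h y - \<phi> y"
      using seE_add_const[OF sp memH0[OF iid \<phi>B \<phi>L B0, of y "h powr (1 / \<alpha>)"], of "- \<phi> y"] unfolding T_def by simp
    moreover have "\<bar>E (\<lambda>w. \<phi> (y + h powr (1 / \<alpha>) *\<^sub>R Z 0 w) - \<phi> y) - h * G y\<bar> / h \<le> l h"
      using A2 h by simp
    ultimately have "\<bar>T h y - \<phi> y - h * G y\<bar> / h \<le> l h" by simp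
    with h show ?thesis by (simp add: divide_le_eq mult.commute)
  qed
  have lnn: "0 \<le> l h" if "0 < h" "h \<le> 1" for h
  proof -
    have "0 \<le> \<bar>T h 0 - \<phi> 0 - h * G 0\<bar>" by simp
    also have "\<dots> \<le> h * l h" using A2' that by blast
    finally show ?thesis using that by (simp add: zero_le_mult_iff)
  qed
  define K where "K = 2 * B + l 1"
  have K0: "0 \<le> K" unfolding K_def using lnn[of 1] B0 by simp
  have Gbd: "\<bar>G y\<bar> \<le> K" for y
    using A2'[of 1 y] TB[of 1 y] \<phi>B[of y] unfolding K_def by linarith
  have Gdiff: "\<bar>G y - G x'\<bar> \<le> 2 * B * norm (y - x') / \<tau> + 2 * l \<tau>" for y x'
  proof -
    have "\<tau> * \<bar>G y - G x'\<bar> \<le> 2 * B * norm (y - x') + 2 * \<tau> * l \<tau>"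
    proof -
      have e: "\<tau> * \<bar>G y - G x'\<bar> = \<bar>\<tau> * G y - \<tau> * G x'\<bar>" using ta by (metis abs_mult abs_of_pos right_diff_distrib)
      show ?thesis unfolding e
        using A2'[OF ta, of y] A2'[OF ta, of x'] TL[of \<tau> y x'] \<phi>L[of y x']
        by (simp add: abs_le_iff)
    qed
    then show ?thesis using ta by (simp add: field_simps)
  qed
  define h where "h = s / real n"
  have h: "0 < h" "h \<le> 1" unfolding h_def using s n by (auto simp: divide_le_eq)
  define c where "c = h powr (1 / \<alpha>)"
  define S where "S k w = (\<Sum>i<k. Z i w)" for k w
  define a where "a k = E (\<lambda>w. \<phi> (x + c *\<^sub>R S k w))" for k
  define C0 where "C0 = l h + 2 * l \<tau> + 4 * B * r / \<tau>"
  define Q where "Q = C0 + 2 * K * M * s powr (\<delta> / \<alpha>) / r powr \<delta>"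
  have C0nn: "0 \<le> C0" unfolding C0_def using lnn[OF h] lnn[OF ta] B0 r ta by simp
  have Eq: "E (\<lambda>w. qf r (c *\<^sub>R S k w)) \<le> M * s powr (\<delta> / \<alpha>) / r powr \<delta>" if k: "k \<le> n" for k
  proof (cases "k = 0")
    case True
    then show ?thesis using seE_const[OF sp, of 0] M0 unfolding S_def by (simp add: qf_zero)
  next
    case False
    define p where "p = real k powr (-1 / \<alpha>)"
    define t where "t = c * real k powr (1 / \<alpha>)"
    have kpos: "0 < real k" using False by simp
    have t0: "0 < t" unfolding t_def c_def using h kpos by simp
    have tp: "t * p = c" unfolding t_def p_def using kpos
      by (simp add: mult.assoc powr_add[symmetric])
    have "E (\<lambda>w. qf r (c *\<^sub>R S k w)) = E (\<lambda>w. qf r (t *\<^sub>R (p *\<^sub>R (\<Sum>i<k. Z i w))))"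
      unfolding S_def using tp by simp
    also have "\<dots> \<le> t powr \<delta> * M / r powr \<delta>"
      by (rule q_bound[OF sp iid _ t0 r de]) (use Mb[of k] False in \<open>simp add: p_def\<close>)
    also have "t powr \<delta> \<le> s powr (\<delta> / \<alpha>)"
    proof -
      have "t = (h * real k) powr (1 / \<alpha>)" unfolding t_def c_def using h kpos by (simp add: powr_mult)
      then have "t powr \<delta> = (h * real k) powr (\<delta> / \<alpha>)" using h kpos by (simp add: powr_powr)
      also have "\<dots> \<le> s powr (\<delta> / \<alpha>)"
      proof (rule powr_mono2)
        show "h * real k \<le> s" unfolding h_def using k n s by (simp add: field_simps)
      qed (use de al h kpos in auto)
      finally show ?thesis .
    qed
    then have "t powr \<delta> * M / r powr \<delta> \<le> s powr (\<delta> / \<alpha>) * M / r powr \<delta>"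
      using M0 r by (simp add: divide_right_mono mult_right_mono)
    finally show ?thesis by (simp add: mult.commute)
  qed
  have step: "\<bar>a (Suc k) - a k - h * G x\<bar> \<le> h * Q" if k: "k < n" for k
  proof -
    define D where "D y = T h y - \<phi> y" for y
    have DB: "\<bar>D y\<bar> \<le> 2 * B" for y unfolding D_def using TB[of h y] \<phi>B[of y] by linarith
    have DL: "\<bar>D y - D y'\<bar> \<le> (2 * B) * norm (y - y')" for y y'
      unfolding D_def using TL[of h y y'] \<phi>L[of y y'] by linarith
    have "a (Suc k) = E (\<lambda>w. T h (x + c *\<^sub>R S k w))"
      unfolding a_def S_def T_def c_def using step_formula[OF sp iid \<phi>B \<phi>L B0] by simp
    also have "\<dots> = E (\<lambda>w. \<phi> (x + c *\<^sub>R S k w) + D (x + c *\<^sub>R S k w))" unfolding D_def by simp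
    finally have aS: "a (Suc k) = E (\<lambda>w. \<phi> (x + c *\<^sub>R S k w) + D (x + c *\<^sub>R S k w))" .
    define qq where "qq z = 2 * K * qf r z + C0" for z :: 'd
    have qqB: "\<bar>qq z\<bar> \<le> 2 * K + C0" for z unfolding qq_def using qf_bounds[of r z] K0 C0nn
      using mult_left_mono[of "qf r z" 1 K] by (simp add: abs_le_iff)
    have qqL: "\<bar>qq z - qq z'\<bar> \<le> (2 * K / r) * norm (z - z')" for z z'
    proof -
      have "\<bar>qq z - qq z'\<bar> = 2 * K * \<bar>qf r z - qf r z'\<bar>" unfolding qq_def using K0
        by (simp add: right_diff_distrib[symmetric] abs_mult)
      also have "\<dots> \<le> 2 * K * ((1 / r) * norm (z - z'))" using mult_left_mono[OF qf_lip[OF r, of z z']] K0 by simp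
      finally show ?thesis by simp
    qed
    have memX: "(\<lambda>w. \<phi> (x + c *\<^sub>R S k w)) \<in> H" unfolding S_def by (rule memH[OF iid \<phi>B \<phi>L B0])
    have memD: "(\<lambda>w. D (x + c *\<^sub>R S k w)) \<in> H" unfolding S_def by (rule memH[OF iid DB DL]) (use B0 in simp)
    have memq: "(\<lambda>w. qq (c *\<^sub>R S k w)) \<in> H" using memH[OF iid qqB qqL, of 0 c k] K0 r unfolding S_def by simp
    have memq1: "(\<lambda>w. qf r (c *\<^sub>R S k w)) \<in> H" using memH[OF iid qf_bounds(3) qf_lip[OF r], of 0 c k] r unfolding S_def by simp
    have pw: "\<bar>D (x + c *\<^sub>R S k w) - h * G x\<bar> \<le> h * qq (c *\<^sub>R S k w)" for w
    proof -
      define z where "z = c *\<^sub>R S k w"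
      have 1: "\<bar>D (x + z) - h * G (x + z)\<bar> \<le> h * l h" unfolding D_def using A2'[OF h] by simp
      have 2: "\<bar>G (x + z) - G x\<bar> \<le> 2 * l \<tau> + 4 * B * r / \<tau> + 2 * K * qf r z"
      proof (cases "norm z \<le> 2 * r")
        case True
        have g1: "\<bar>G (x + z) - G x\<bar> \<le> 2 * B * norm z / \<tau> + 2 * l \<tau>" using Gdiff[of "x + z" x] by simp
        have g2: "2 * B * norm z / \<tau> \<le> 4 * B * r / \<tau>"
        proof -
          have "2 * B * norm z \<le> 4 * B * r" using mult_left_mono[OF True, of "2 * B"] B0 by simp
          then show ?thesis using ta by (simp add: divide_right_mono)
        qed
        have "\<bar>G (x + z) - G x\<bar> \<le> 4 * B * r / \<tau> + 2 * l \<tau>" using g1 g2 by linarith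
        moreover have "0 \<le> 2 * K * qf r z" using K0 qf_bounds(1)[of r z] by simp
        ultimately show ?thesis by linarith
      next
        case False
        then have "qf r z = 1" using qf_big[OF r, of z] by linarith
        moreover have "\<bar>G (x + z) - G x\<bar> \<le> 2 * K" using Gbd[of "x+z"] Gbd[of x] by linarith
        moreover have "0 \<le> 4 * B * r / \<tau>" using B0 r ta by simp
        ultimately show ?thesis using lnn[OF ta] by simp
      qed
      have "\<bar>D (x + z) - h * G x\<bar> \<le> \<bar>D (x + z) - h * G (x + z)\<bar> + h * \<bar>G (x + z) - G x\<bar>"
      proof -
        have "h * \<bar>G (x + z) - G x\<bar> = \<bar>h * G (x + z) - h * G x\<bar>" using h by (metis abs_mult abs_of_pos right_diff_distrib)
        then show ?thesis by linarith
      qed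
      also have "\<dots> \<le> h * l h + h * (2 * l \<tau> + 4 * B * r / \<tau> + 2 * K * qf r z)"
        using 1 mult_left_mono[OF 2, of h] h by linarith
      also have "\<dots> = h * qq z" unfolding qq_def C0_def by (simp add: algebra_simps)
      finally show ?thesis unfolding z_def .
    qed
    have "\<bar>E (\<lambda>w. \<phi> (x + c *\<^sub>R S k w) + D (x + c *\<^sub>R S k w)) - a k - h * G x\<bar> \<le> E (\<lambda>w. h * qq (c *\<^sub>R S k w))"
      unfolding a_def by (rule seE_step[OF sp memX memD seH_cmult[OF sp memq] pw])
    then have "\<bar>a (Suc k) - a k - h * G x\<bar> \<le> E (\<lambda>w. h * qq (c *\<^sub>R S k w))" by (simp only: aS)
    also have "E (\<lambda>w. h * qq (c *\<^sub>R S k w)) = h * E (\<lambda>w. qq (c *\<^sub>R S k w))"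
      using seE_cmult[OF sp memq, of h] h by simp
    also have "E (\<lambda>w. qq (c *\<^sub>R S k w)) = 2 * K * E (\<lambda>w. qf r (c *\<^sub>R S k w)) + C0"
      unfolding qq_def using seE_add_const[OF sp seH_cmult[OF sp memq1, of "2 * K"], of C0] seE_cmult[OF sp memq1, of "2*K"] K0 by simp
    also have "h * (2 * K * E (\<lambda>w. qf r (c *\<^sub>R S k w)) + C0) \<le> h * Q"
    proof -
      have "2 * K * E (\<lambda>w. qf r (c *\<^sub>R S k w)) \<le> 2 * K * (M * s powr (\<delta> / \<alpha>) / r powr \<delta>)"
        using mult_left_mono[OF Eq[of k]] k K0 by simp
      then show ?thesis unfolding Q_def using h by (simp add: mult_left_mono)
    qed
    finally show ?thesis .
  qed
  have tel: "\<bar>a k - a 0 - real k * h * G x\<bar> \<le> real k * h * Q" if "k \<le> n" for k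
    using that
  proof (induction k)
    case 0 then show ?case by simp
  next
    case (Suc k)
    then have "\<bar>a k - a 0 - real k * h * G x\<bar> \<le> real k * h * Q" by simp
    moreover have "\<bar>a (Suc k) - a k - h * G x\<bar> \<le> h * Q" using step Suc.prems by simp
    ultimately show ?case by (simp add: algebra_simps abs_le_iff)
  qed
  have a0: "a 0 = \<phi> x" unfolding a_def S_def using seE_const[OF sp] by simp
  have nh: "real n * h = s" unfolding h_def using n by simp
  have "\<bar>a n - \<phi> x - s * G x\<bar> \<le> s * Q" using tel[of n] a0 nh by simp
  then show ?thesis unfolding a_def S_def c_def h_def Q_def C0_def K_def by simp
qed


theorem theorem4p4:
  fixes H :: "('w \<Rightarrow> real) set" and E :: "('w \<Rightarrow> real) \<Rightarrow> real"
    and Z :: "nat \<Rightarrow> 'w \<Rightarrow> 'd::euclidean_space"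
    and \<alpha> \<delta> \<Lambda>l \<Lambda>u :: real and \<phi> :: "'d \<Rightarrow> real"
  assumes alpha: "0 < \<alpha>" "\<alpha> \<le> 1"
    and Lambda: "0 < \<Lambda>l" "0 < \<Lambda>u"
    and space: "sublinear_expectation_space H E"
    and iid: "iid_seq H E Z"
    and infinite_mean: "\<forall>i. ext_expect E norm (Z i) = \<infinity>"
    and A1: "0 < \<delta>" "\<delta> < \<alpha>"
      "(SUP n\<in>{1..}. ext_expect E (\<lambda>y. norm y powr \<delta>)
          (\<lambda>w. real n powr (-1 / \<alpha>) *\<^sub>R (\<Sum>i<n. Z i w))) < \<infinity>"
    and A2: "\<forall>\<psi>. Cb3 \<psi> \<longrightarrow> (\<exists>l::real \<Rightarrow> real. (l \<longlongrightarrow> 0) (at_right 0) \<and>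
      (\<forall>s\<in>{0<..1}. \<forall>x. \<bar>E (\<lambda>w. \<psi> (x + s powr (1 / \<alpha>) *\<^sub>R Z 0 w) - \<psi> x)
                         - s * sup_gen \<alpha> \<Lambda>l \<Lambda>u \<psi> x\<bar> / s \<le> l s))"
    and phi: "Cb3 \<phi>"
  shows "\<exists>\<rho>::real \<Rightarrow> real. ((\<lambda>s. \<rho> s / s) \<longlongrightarrow> 0) (at_right 0) \<and>
    (\<forall>s\<in>{0..1}. \<forall>x. limsup (\<lambda>n. ereal \<bar>E (\<lambda>w. \<phi> (x + (s / real n) powr (1 / \<alpha>) *\<^sub>R (\<Sum>i<n. Z i w)))
                                       - \<phi> x - s * sup_gen \<alpha> \<Lambda>l \<Lambda>u \<phi> x\<bar>) \<le> ereal (\<rho> s))"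
proof -
  have "\<exists>B. 0 \<le> B \<and> (\<forall>y. \<bar>\<phi> y\<bar> \<le> B) \<and> (\<forall>a b. \<bar>\<phi> a - \<phi> b\<bar> \<le> B * norm (a - b))"
    by (rule cb3_bl[OF phi]) blast
  then obtain B where B0: "0 \<le> B" and \<phi>B': "\<forall>y. \<bar>\<phi> y\<bar> \<le> B" and \<phi>L': "\<forall>a b. \<bar>\<phi> a - \<phi> b\<bar> \<le> B * norm (a - b)"
    by blast
  have \<phi>B: "\<And>y. \<bar>\<phi> y\<bar> \<le> B" using \<phi>B' by blast
  have \<phi>L: "\<And>a b. \<bar>\<phi> a - \<phi> b\<bar> \<le> B * norm (a - b)" using \<phi>L' by blast
  define G where "G = sup_gen \<alpha> \<Lambda>l \<Lambda>u \<phi>"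
  obtain l :: "real \<Rightarrow> real" where l_lim: "(l \<longlongrightarrow> 0) (at_right 0)"
    and lA2: "\<forall>s\<in>{0<..1}. \<forall>x. \<bar>E (\<lambda>w. \<phi> (x + s powr (1 / \<alpha>) *\<^sub>R Z 0 w) - \<phi> x) - s * G x\<bar> / s \<le> l s"
    using A2[rule_format, OF phi] unfolding G_def by (elim exE conjE) blast
  have lnn: "0 \<le> l t" if "0 < t" "t \<le> 1" for t
  proof -
    have "\<bar>E (\<lambda>w. \<phi> (0 + t powr (1 / \<alpha>) *\<^sub>R Z 0 w) - \<phi> 0) - t * G 0\<bar> / t \<le> l t" using lA2 that by (simp only: greaterThanAtMost_iff Ball_def)
    moreover have "0 \<le> \<bar>E (\<lambda>w. \<phi> (0 + t powr (1 / \<alpha>) *\<^sub>R Z 0 w) - \<phi> 0) - t * G 0\<bar> / t" using that by simp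
    ultimately show ?thesis by linarith
  qed
  define SV where "SV = (SUP n\<in>{1..}. ext_expect E (\<lambda>y. norm y powr \<delta>) (\<lambda>w. real n powr (-1 / \<alpha>) *\<^sub>R (\<Sum>i<n. Z i w)))"
  have SVu: "ext_expect E (\<lambda>y. norm y powr \<delta>) (\<lambda>w. real k powr (-1 / \<alpha>) *\<^sub>R (\<Sum>i<k. Z i w)) \<le> SV" if "1 \<le> k" for k
    unfolding SV_def by (rule SUP_upper) (use that in simp)
  have SV0: "0 \<le> SV"
  proof -
    have "0 \<le> ext_expect E (\<lambda>y. norm y powr \<delta>) (\<lambda>w. real 1 powr (-1 / \<alpha>) *\<^sub>R (\<Sum>i<1. Z i w))"
      by (rule ext_nonneg[OF space]) simp
    also have "\<dots> \<le> SV" by (rule SVu) simp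
    finally show ?thesis .
  qed
  have SVf: "SV < \<infinity>" using A1(3) unfolding SV_def .
  define M where "M = real_of_ereal SV"
  have SVM: "SV = ereal M" unfolding M_def using SV0 SVf by (cases SV) auto
  have M0: "0 \<le> M" using SV0 SVM by simp
  have Mb: "ext_expect E (\<lambda>y. norm y powr \<delta>) (\<lambda>w. real k powr (-1 / \<alpha>) *\<^sub>R (\<Sum>i<k. Z i w)) \<le> ereal M" if "1 \<le> k" for k
    using SVu[OF that] SVM by simp
  define K where "K = 2 * B + l 1"
  have K0: "0 \<le> K" unfolding K_def using lnn[of 1] B0 by simp
  define Qs where "Qs s t r = 2 * l t + 4 * B * r / t + 2 * K * M * s powr (\<delta> / \<alpha>) / r powr \<delta>" for s t r
  define Qset where "Qset s = {Qs s t r | t r. t \<in> {0<..1} \<and> 0 < r}" for s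
  define \<rho> where "\<rho> s = s * Inf (Qset s)" for s
  have Qne: "Qset s \<noteq> {}" for s
  proof -
    have "Qs s 1 1 \<in> Qset s" unfolding Qset_def by (rule CollectI, rule exI[of _ 1], rule exI[of _ 1]) simp
    then show ?thesis by blast
  qed
  have Qnn: "0 \<le> v" if vin: "v \<in> Qset s" for v s
  proof -
    obtain t r where v: "v = Qs s t r" "0 < t" "t \<le> 1" "0 < r" using vin unfolding Qset_def by auto
    have "0 \<le> 2 * l t" using lnn v by simp
    moreover have "0 \<le> 4 * B * r / t" using B0 v by simp
    moreover have "0 \<le> 2 * K * M * s powr (\<delta> / \<alpha>) / r powr \<delta>" using K0 M0 by simp
    ultimately show ?thesis unfolding v Qs_def by linarith
  qed
  have Qbdd: "bdd_below (Qset s)" for s using Qnn by (meson bdd_below.I)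
  have part1: "((\<lambda>s. \<rho> s / s) \<longlongrightarrow> 0) (at_right 0)"
  proof (rule tendstoI)
    fix e :: real assume e: "0 < e"
    have "\<forall>\<^sub>F t in at_right 0. l t < e / 4" using order_tendstoD(2)[OF l_lim, of "e / 4"] e by linarith
    then obtain b where b: "0 < b" "\<And>y. 0 < y \<Longrightarrow> y < b \<Longrightarrow> l y < e / 4"
      unfolding eventually_at_right_field by auto
    define t where "t = min (b / 2) 1"
    have t: "0 < t" "t \<le> 1" "l t < e / 4" unfolding t_def using b by auto
    define r where "r = e * t / (16 * B + 16)"
    have r: "0 < r" unfolding r_def using e t B0 by simp
    have rB: "4 * B * r / t < e / 4"
    proof -
      have rt: "r / t = e / (16 * B + 16)" unfolding r_def using t by simp
      have "4 * B * r / t = (4 * B) * (r / t)" by simp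
      also have "\<dots> = (4 * B * e) / (16 * B + 16)" unfolding rt by simp
      also have "\<dots> < e / 4" using B0 e by (simp add: field_simps)
      finally show ?thesis .
    qed
    have lim0: "((\<lambda>s. 2 * K * M * s powr (\<delta> / \<alpha>) / r powr \<delta>) \<longlongrightarrow> 0) (at_right (0::real))"
    proof -
      have "((\<lambda>s::real. s) \<longlongrightarrow> 0) (at_right 0)" by (rule tendsto_ident_at)
      moreover have "\<forall>\<^sub>F s in at_right (0::real). 0 \<le> s" unfolding eventually_at_right_field by (intro exI[of _ 1]) auto
      ultimately have "((\<lambda>s::real. s powr (\<delta> / \<alpha>)) \<longlongrightarrow> 0) (at_right 0)"
        using tendsto_zero_powrI[of "\<lambda>s. s" "at_right 0" "\<lambda>_. \<delta> / \<alpha>" "\<delta> / \<alpha>"] A1 alpha by simp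
      then have "((\<lambda>s. (2 * K * M) * s powr (\<delta> / \<alpha>) / r powr \<delta>) \<longlongrightarrow> (2 * K * M) * 0 / r powr \<delta>) (at_right (0::real))"
        by (intro tendsto_intros) (use r in auto)
      then show ?thesis by simp
    qed
    have ev1: "\<forall>\<^sub>F s in at_right (0::real). 2 * K * M * s powr (\<delta> / \<alpha>) / r powr \<delta> < e / 4"
      using order_tendstoD(2)[OF lim0, of "e / 4"] e by linarith
    have ev2: "\<forall>\<^sub>F s in at_right (0::real). 0 < s" unfolding eventually_at_right_field by (intro exI[of _ 1]) auto
    show "\<forall>\<^sub>F s in at_right 0. dist (\<rho> s / s) 0 < e"
      using ev1 ev2
    proof eventually_elim
      case (elim s)
      have "\<rho> s / s = Inf (Qset s)" unfolding \<rho>_def using elim by simp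
      moreover have "0 \<le> Inf (Qset s)" by (rule cInf_greatest[OF Qne]) (use Qnn in auto)
      moreover have "Inf (Qset s) \<le> Qs s t r"
        by (rule cInf_lower[OF _ Qbdd]) (use t r in \<open>auto simp: Qset_def\<close>)
      moreover have "Qs s t r < e" unfolding Qs_def using t rB elim by linarith
      ultimately show ?case by simp
    qed
  qed
  have part2: "limsup (\<lambda>n. ereal \<bar>E (\<lambda>w. \<phi> (x + (s / real n) powr (1 / \<alpha>) *\<^sub>R (\<Sum>i<n. Z i w)))
                                       - \<phi> x - s * G x\<bar>) \<le> ereal (\<rho> s)" if s: "s \<in> {0..1}" for s x
  proof (cases "s = 0")
    case True
    then show ?thesis unfolding \<rho>_def using seE_const[OF space] by (simp add: Limsup_const)
  next
    case False
    with s have s0: "0 < s" "s \<le> 1" by auto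
    let ?f = "\<lambda>n. ereal \<bar>E (\<lambda>w. \<phi> (x + (s / real n) powr (1 / \<alpha>) *\<^sub>R (\<Sum>i<n. Z i w))) - \<phi> x - s * G x\<bar>"
    have key: "limsup ?f \<le> ereal (s * v)" if v: "v \<in> Qset s" for v
    proof -
      obtain t r where vv: "v = Qs s t r" "0 < t" "t \<le> 1" "0 < r" using v unfolding Qset_def by auto
      have lsn: "(\<lambda>n. l (s / real n)) \<longlonglongrightarrow> 0"
      proof (rule filterlim_compose[OF l_lim])
        show "filterlim (\<lambda>n. s / real n) (at_right 0) sequentially"
          unfolding filterlim_at
        proof
          show "\<forall>\<^sub>F n in sequentially. s / real n \<in> {0<..} \<and> s / real n \<noteq> 0"
            using eventually_ge_at_top[of "1::nat"] by eventually_elim (use s0 in auto)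
          show "((\<lambda>n. s / real n) \<longlongrightarrow> 0) sequentially" by (rule lim_const_over_n)
        qed
      qed
      have lim: "(\<lambda>n. ereal (s * (l (s / real n) + v))) \<longlonglongrightarrow> ereal (s * (0 + v))"
        by (intro tendsto_intros lsn)
      have "limsup ?f \<le> limsup (\<lambda>n. ereal (s * (l (s / real n) + v)))"
      proof (rule Limsup_mono)
        show "\<forall>\<^sub>F n in sequentially. ?f n \<le> ereal (s * (l (s / real n) + v))"
          using eventually_ge_at_top[of "1::nat"]
        proof eventually_elim
          case (elim n)
          have "\<bar>E (\<lambda>w. \<phi> (x + (s / real n) powr (1 / \<alpha>) *\<^sub>R (\<Sum>i<n. Z i w))) - \<phi> x - s * G x\<bar>
             \<le> s * (l (s / real n) + 2 * l t + 4 * B * r / t + 2 * (2 * B + l 1) * M * s powr (\<delta> / \<alpha>) / r powr \<delta>)"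
            by (rule main_bound[OF space iid B0 \<phi>B \<phi>L lA2 Mb M0 alpha(1) A1(1) s0 elim vv(2,3,4)])
          then show ?case unfolding vv Qs_def K_def by (simp add: algebra_simps)
        qed
      qed
      also have "\<dots> = ereal (s * (0 + v))" by (rule lim_imp_Limsup[OF _ lim]) simp
      finally show ?thesis by simp
    qed
    show ?thesis
    proof (rule ereal_le_epsilon2)
      fix e :: real assume e: "0 < e"
      have "Inf (Qset s) < Inf (Qset s) + e / s" using e s0 by simp
      then obtain v where v: "v \<in> Qset s" "v < Inf (Qset s) + e / s" using cInf_lessD[OF Qne] by blast
      have "limsup ?f \<le> ereal (s * v)" by (rule key[OF v(1)])
      also have "s * v \<le> \<rho> s + e" unfolding \<rho>_def using v(2) s0 by (simp add: field_simps)
      finally show "limsup ?f \<le> ereal (\<rho> s) + ereal e" by simp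
    qed
  qed
  show ?thesis
    by (intro exI[of _ \<rho>] conjI part1) (use part2 in \<open>simp add: G_def\<close>)
qed

end
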